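(* Let $d\ge 2$ be an even integer, $p\ge 0$ an integer, and $M\ge 1$ an integer with $2M+1\ge d+p+1$. Let $\gamma:[0,\pi]\to[0,\infty)$ be an integrable weighting function that is positive on a subset of $[0,\pi]$ of positive measure. For $\mathbf a=(a_{-M},\dots,a_M)\in\mathbb R^{2M+1}$ define the spectral error $$e(\eta)=\sum_{m=-M}^{M}a_m e^{jm\eta}-(j\eta)^d,\qquad \eta\in[0,\pi],\ j=\sqrt{-1}.$$ Let $\mathbf a^\ast$ be a minimizer of $$\int_0^\pi \gamma(\eta)\,|e(\eta)|^2\,d\eta$$ over all $\mathbf a\in\mathbb R^{2M+1}$ satisfying the order-of-accuracy constraints $$\sum_{m=-M}^{M} m^q a_m=\begin{cases}0,& q\neq d,\\ d!,& q=d,\end{cases}\qquad q=0,1,\dots,d+p .$$ Then the spectral error of $\mathbf a^\ast$ satisfies $\operatorname{Im}[e(\eta)]=0$ for all $\eta\in[0,\pi]$ (equivalently $\sum_m a^\ast_m\sin(m\eta)\equiv 0$).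
   Context: This concerns explicit finite difference approximations $f^{(d)}(x_i)\approx (\Delta x)^{-d}\sum_{m=-M}^{M}a_m f(x_i+m\Delta x)$ of the $d$-th derivative on a uniform grid with spacing $\Delta x$; $\eta=k\Delta x$ is the normalized wavenumber. The constraints express that the approximation has truncation error of order $p+1$. Here $0^0=1$. *)

theory Defs
  imports "HOL-Analysis.Analysis"
begin

text \<open>Coefficients a_{-M},...,a_M are represented as a function int => real;
  only the values on {-M..M} matter.\<close>

definition spectral_error :: "nat \<Rightarrow> nat \<Rightarrow> (int \<Rightarrow> real) \<Rightarrow> real \<Rightarrow> complex" where
  "spectral_error M d a \<eta> =
     (\<Sum>m\<in>{-int M..int M}. complex_of_real (a m) * exp (\<i> * of_int m * complex_of_real \<eta>))
     - (\<i> * complex_of_real \<eta>) ^ d"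

definition order_constraints :: "nat \<Rightarrow> nat \<Rightarrow> nat \<Rightarrow> (int \<Rightarrow> real) \<Rightarrow> bool" where
  "order_constraints M d p a \<longleftrightarrow>
     (\<forall>q\<in>{0..d+p}. (\<Sum>m\<in>{-int M..int M}. real_of_int m ^ q * a m) = (if q = d then fact d else 0))"

definition weighted_cost :: "nat \<Rightarrow> nat \<Rightarrow> (real \<Rightarrow> real) \<Rightarrow> (int \<Rightarrow> real) \<Rightarrow> real" where
  "weighted_cost M d \<gamma> a = (LINT \<eta>:{0..pi}|lborel. \<gamma> \<eta> * (cmod (spectral_error M d a \<eta>))^2)"

end

theory Submission imports Defs "HOL-Complex_Analysis.Complex_Analysis" begin

lemma sum_reflect:
  fixes f :: "int \<Rightarrow> 'a::comm_monoid_add"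
  shows "(\<Sum>m\<in>{-int M..int M}. f m) = (\<Sum>m\<in>{-int M..int M}. f (-m))"
  by (rule sum.reindex_bij_witness[of _ uminus uminus]) auto

lemma i_pow_even:
  assumes "even d"
  shows "(\<i> * complex_of_real x) ^ d = complex_of_real ((-1) ^ (d div 2) * x ^ d)"
proof -
  obtain k where d: "d = 2 * k" using assms by blast
  have "(\<i> * complex_of_real x) ^ d = ((\<i> * complex_of_real x) ^ 2) ^ k"
    by (simp add: d power_mult)
  also have "(\<i> * complex_of_real x) ^ 2 = - (complex_of_real x ^ 2)"
    by (simp add: power_mult_distrib)
  also have "(- (complex_of_real x ^ 2)) ^ k = (-1) ^ k * (complex_of_real x ^ 2) ^ k"
    by (rule power_minus)
  finally show ?thesis by (simp add: d power_mult)
qed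

lemma term_eq:
  "complex_of_real r * exp (\<i> * of_int m * complex_of_real x) = complex_of_real r * cis (of_int m * x)"
proof -
  have "\<i> * of_int m * complex_of_real x = \<i> * complex_of_real (of_int m * x)" by simp
  then show ?thesis by (simp only: cis_conv_exp)
qed

lemma Im_term: "Im (complex_of_real r * cis t) = r * sin t" by simp
lemma Re_term: "Re (complex_of_real r * cis t) = r * cos t" by simp

lemma se_Im:
  assumes "even d"
  shows "Im (spectral_error M d a x) = (\<Sum>m\<in>{-int M..int M}. a m * sin (of_int m * x))"
  unfolding spectral_error_def term_eq i_pow_even[OF assms] minus_complex.sel Im_sum Im_term Im_complex_of_real
  by simp

lemma se_Re:
  assumes "even d"
  shows "Re (spectral_error M d a x) = (\<Sum>m\<in>{-int M..int M}. a m * cos (of_int m * x)) - (-1) ^ (d div 2) * x ^ d"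
  unfolding spectral_error_def term_eq i_pow_even[OF assms] minus_complex.sel Re_sum Re_term Re_complex_of_real
  by simp

lemma se_cont: "continuous_on UNIV (spectral_error M d a)"
  unfolding spectral_error_def [abs_def] by (intro continuous_intros)

lemma int_prod:
  fixes \<gamma> h :: "real \<Rightarrow> real"
  assumes "set_integrable lborel {0..pi} \<gamma>" "continuous_on UNIV h"
  shows "set_integrable lborel {0..pi} (\<lambda>x. \<gamma> x * h x)"
proof -
  have "compact (h ` {0..pi})"
    by (rule compact_continuous_image) (use assms(2) continuous_on_subset in auto)
  then have "bounded (h ` {0..pi})" by (rule compact_imp_bounded)
  then obtain B where "\<forall>y\<in>h ` {0..pi}. norm y \<le> B" by (auto simp: bounded_iff)
  then have B: "\<forall>x\<in>{0..pi}. \<bar>h x\<bar> \<le> B" by auto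
  have m1: "(\<lambda>x. indicator {0..pi} x *\<^sub>R \<gamma> x) \<in> borel_measurable lborel"
    using assms(1) unfolding set_integrable_def by blast
  have m2: "h \<in> borel_measurable lborel"
    using assms(2) by (simp add: borel_measurable_continuous_onI)
  have m: "(\<lambda>x. indicator {0..pi} x *\<^sub>R (\<gamma> x * h x)) \<in> borel_measurable lborel"
  proof -
    have "(\<lambda>x. (indicator {0..pi} x *\<^sub>R \<gamma> x) * h x) \<in> borel_measurable lborel"
      using m1 m2 by measurable
    then show ?thesis by (simp add: mult.assoc)
  qed
  show ?thesis unfolding set_integrable_def
  proof (rule Bochner_Integration.integrable_bound[OF _ m])
    show "integrable lborel (\<lambda>x. B *\<^sub>R (indicator {0..pi} x *\<^sub>R \<gamma> x))"
      using assms(1) unfolding set_integrable_def by simp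
    show "AE x in lborel. norm (indicator {0..pi} x *\<^sub>R (\<gamma> x * h x)) \<le> norm (B *\<^sub>R (indicator {0..pi} x *\<^sub>R \<gamma> x))"
    proof (rule AE_I2)
      fix x show "norm (indicator {0..pi} x *\<^sub>R (\<gamma> x * h x)) \<le> norm (B *\<^sub>R (indicator {0..pi} x *\<^sub>R \<gamma> x))"
      proof (cases "x \<in> {0..pi}")
        case True
        then have "\<bar>h x\<bar> \<le> B" "0 \<le> B" using B by (auto intro: order_trans[OF abs_ge_zero])
        then have "\<bar>\<gamma> x\<bar> * \<bar>h x\<bar> \<le> B * \<bar>\<gamma> x\<bar>"
          by (metis abs_ge_zero mult.commute mult_left_mono)
        then show ?thesis using True \<open>0 \<le> B\<close> by (simp add: abs_mult)
      qed simp
    qed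
  qed
qed

theorem lemma1:
  fixes d p M :: nat and \<gamma> :: "real \<Rightarrow> real" and astar :: "int \<Rightarrow> real"
  assumes "even d" and "d \<ge> 2" and "M \<ge> 1" and "2 * M + 1 \<ge> d + p + 1"
    and "set_integrable lborel {0..pi} \<gamma>"
    and "\<forall>\<eta>\<in>{0..pi}. \<gamma> \<eta> \<ge> 0"
    and "emeasure lborel {\<eta>\<in>{0..pi}. \<gamma> \<eta> > 0} > 0"
    and "order_constraints M d p astar"
    and "\<forall>a. order_constraints M d p a \<longrightarrow> weighted_cost M d \<gamma> astar \<le> weighted_cost M d \<gamma> a"
  shows "\<forall>\<eta>\<in>{0..pi}. Im (spectral_error M d astar \<eta>) = 0"
proof -
  note ev = assms(1)
  define A where "A = {-int M..int M}"
  define s where "s m = (astar m + astar (-m)) / 2" for m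
  define e where "e = spectral_error M d astar"
  define S where "S x = (\<Sum>m\<in>A. astar m * sin (of_int m * x))" for x
  have ImS: "Im (e x) = S x" for x unfolding e_def S_def A_def by (rule se_Im[OF ev])
  have cs: "order_constraints M d p s"
    unfolding order_constraints_def
  proof
    fix q assume q: "q \<in> {0..d+p}"
    have c: "(\<Sum>m\<in>A. real_of_int m ^ q * astar m) = (if q = d then fact d else 0)"
      using assms(8) q unfolding order_constraints_def A_def by blast
    have h1: "(\<Sum>m\<in>A. real_of_int m ^ q * s m) = ((\<Sum>m\<in>A. real_of_int m ^ q * astar m) + (\<Sum>m\<in>A. real_of_int m ^ q * astar (-m))) / 2"
      unfolding s_def sum.distrib[symmetric] sum_divide_distrib by (intro sum.cong) (simp_all add: field_simps)
    have h2: "(\<Sum>m\<in>A. real_of_int m ^ q * astar (-m)) = (if even q then 1 else -1) * (\<Sum>m\<in>A. real_of_int m ^ q * astar m)"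
    proof (cases "even q")
      case True
      then show ?thesis unfolding A_def by (subst sum_reflect) simp
    next
      case False
      then show ?thesis unfolding A_def by (subst sum_reflect) (simp add: sum_negf)
    qed
    show "(\<Sum>m\<in>{-int M..int M}. real_of_int m ^ q * s m) = (if q = d then fact d else 0)"
    proof (cases "even q")
      case True
      then show ?thesis using h1 h2 c unfolding A_def by simp
    next
      case False
      then have "q \<noteq> d" using ev by auto
      then show ?thesis using h1 h2 c unfolding A_def by simp
    qed
  qed
  have Im_s: "Im (spectral_error M d s x) = 0" for x
  proof -
    have "(\<Sum>m\<in>A. s m * sin (of_int m * x)) = (\<Sum>m\<in>A. s (-m) * sin (of_int (-m) * x))"
      unfolding A_def by (rule sum_reflect)
    also have "\<dots> = - (\<Sum>m\<in>A. s m * sin (of_int m * x))"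
      by (simp add: s_def add.commute sum_negf)
    finally have "(\<Sum>m\<in>A. s m * sin (of_int m * x)) = 0" by simp
    then show ?thesis using se_Im[OF ev] unfolding A_def by simp
  qed
  have Re_s: "Re (spectral_error M d s x) = Re (e x)" for x
  proof -
    have r: "(\<Sum>m\<in>A. astar (-m) * cos (of_int m * x)) = (\<Sum>m\<in>A. astar m * cos (of_int m * x))"
      unfolding A_def by (subst sum_reflect) simp
    have "(\<Sum>m\<in>A. s m * cos (of_int m * x)) = ((\<Sum>m\<in>A. astar m * cos (of_int m * x)) + (\<Sum>m\<in>A. astar (-m) * cos (of_int m * x))) / 2"
      unfolding s_def sum.distrib[symmetric] sum_divide_distrib by (intro sum.cong) (simp_all add: field_simps)
    then have "(\<Sum>m\<in>A. s m * cos (of_int m * x)) = (\<Sum>m\<in>A. astar m * cos (of_int m * x))"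
      using r by simp
    then show ?thesis unfolding e_def using se_Re[OF ev] unfolding A_def by simp
  qed
  have ce: "continuous_on UNIV e" unfolding e_def by (rule se_cont)
  have contR: "continuous_on UNIV (\<lambda>x. Re (e x) ^ 2)"
    by (rule continuous_on_power[OF continuous_on_Re[OF ce]])
  have contI: "continuous_on UNIV (\<lambda>x. Im (e x) ^ 2)"
    by (rule continuous_on_power[OF continuous_on_Im[OF ce]])
  have iR: "set_integrable lborel {0..pi} (\<lambda>x. \<gamma> x * Re (e x) ^ 2)"
    by (rule int_prod[OF assms(5) contR])
  have iI: "set_integrable lborel {0..pi} (\<lambda>x. \<gamma> x * Im (e x) ^ 2)"
    by (rule int_prod[OF assms(5) contI])
  have ws: "weighted_cost M d \<gamma> s = (LINT x:{0..pi}|lborel. \<gamma> x * Re (e x) ^ 2)"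
    unfolding weighted_cost_def cmod_power2 using Im_s Re_s by simp
  have wa: "weighted_cost M d \<gamma> astar = (LINT x:{0..pi}|lborel. \<gamma> x * Re (e x) ^ 2) + (LINT x:{0..pi}|lborel. \<gamma> x * Im (e x) ^ 2)"
    unfolding weighted_cost_def cmod_power2 e_def[symmetric] distrib_left
    by (rule set_integral_add[OF iR iI])
  have le: "(LINT x:{0..pi}|lborel. \<gamma> x * Im (e x) ^ 2) \<le> 0"
  proof -
    have "weighted_cost M d \<gamma> astar \<le> weighted_cost M d \<gamma> s" using assms(9) cs by blast
    then show ?thesis unfolding ws wa by linarith
  qed
  have ge: "0 \<le> (LINT x:{0..pi}|lborel. \<gamma> x * Im (e x) ^ 2)"
    unfolding set_lebesgue_integral_def
    by (intro integral_nonneg_AE AE_I2) (use assms(6) in \<open>auto simp: indicator_def\<close>)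
  define f where "f x = indicator {0..pi} x *\<^sub>R (\<gamma> x * Im (e x) ^ 2)" for x
  have fint: "integrable lborel f" using iI unfolding set_integrable_def f_def .
  have f0: "integral\<^sup>L lborel f = 0" using le ge unfolding set_lebesgue_integral_def f_def by simp
  have nn: "AE x in lborel. 0 \<le> f x"
    by (rule AE_I2) (use assms(6) in \<open>auto simp: f_def indicator_def\<close>)
  have "AE x in lborel. f x = 0" using integral_nonneg_eq_0_iff_AE[OF fint nn] f0 by simp
  define Z where "Z = {x\<in>{0..pi}. S x = 0}"
  have Zinf: "infinite Z"
  proof
    assume fin: "finite Z"
    define P where "P = {\<eta>\<in>{0..pi}. \<gamma> \<eta> > 0}"
    have Pm: "P \<in> sets lborel"
    proof (rule ccontr)
      assume "P \<notin> sets lborel"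
      then have "emeasure lborel P = 0" by (rule emeasure_notin_sets)
      then show False using assms(7) unfolding P_def by simp
    qed
    have "AE x in lborel. x \<notin> Z"
      by (intro AE_not_in countable_imp_null_set_lborel) (use fin in \<open>auto intro: countable_finite\<close>)
    with \<open>AE x in lborel. f x = 0\<close> have "AE x in lborel. x \<notin> P"
    proof eventually_elim
      case (elim x)
      show ?case
      proof
        assume xP: "x \<in> P"
        then have "\<gamma> x * Im (e x) ^ 2 = 0" using elim unfolding f_def P_def by simp
        then have "S x = 0" using xP ImS[of x] unfolding P_def by simp
        then show False using elim xP unfolding Z_def P_def by simp
      qed
    qed
    then have "emeasure lborel P = 0"
    proof -
      have "{x \<in> space lborel. \<not> (x \<notin> P)} = P" by simp
      from AE_iff_measurable[OF Pm this] show ?thesis using \<open>AE x in lborel. x \<notin> P\<close> by simp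
    qed
    then show False using assms(7) unfolding P_def by simp
  qed
  define g where "g z = (\<Sum>m\<in>A. complex_of_real (astar m) * sin (of_int m * z))" for z
  have hol: "g holomorphic_on UNIV" unfolding g_def by (intro holomorphic_intros)
  have greal: "g (complex_of_real x) = complex_of_real (S x)" for x
    unfolding g_def S_def of_real_sum
  proof (intro sum.cong refl)
    fix m :: int
    have "sin (of_int m * complex_of_real x) = complex_of_real (sin (of_int m * x))"
      by (metis of_real_of_int_eq of_real_mult sin_of_real)
    then show "complex_of_real (astar m) * sin (of_int m * complex_of_real x) = complex_of_real (astar m * sin (of_int m * x))"
      by simp
  qed
  have cpt: "compact (complex_of_real ` {0..pi})"
    by (rule compact_continuous_image[OF _ compact_Icc]) (rule continuous_on_of_real_id)
  have "infinite (complex_of_real ` Z)"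
  proof
    assume "finite (complex_of_real ` Z)"
    moreover have "inj_on complex_of_real Z" by (simp add: inj_on_def)
    ultimately have "finite Z" by (rule finite_imageD)
    then show False using Zinf by simp
  qed
  moreover have "complex_of_real ` Z \<subseteq> complex_of_real ` {0..pi}" unfolding Z_def by auto
  ultimately obtain \<xi> where "\<xi> islimpt (complex_of_real ` Z)"
    using compact_eq_Bolzano_Weierstrass[THEN iffD1, OF cpt] by blast
  have gz: "g w = 0" for w
  proof (rule analytic_continuation[OF hol])
    show "\<xi> islimpt (complex_of_real ` Z)" by fact
    show "\<And>z. z \<in> complex_of_real ` Z \<Longrightarrow> g z = 0" using greal unfolding Z_def by auto
  qed (rule open_UNIV, rule connected_UNIV, rule subset_UNIV, rule UNIV_I, rule UNIV_I)
  show ?thesis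
  proof
    fix x :: real assume "x \<in> {0..pi}"
    have "complex_of_real (S x) = 0" using gz[of "complex_of_real x"] greal[of x] by simp
    then show "Im (spectral_error M d astar x) = 0" using ImS unfolding e_def by simp
  qed
qed

end
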